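(* Let $N\ge 2$ and $M\ge 1$ be integers and consider the indirect control system described in the context, with real Lie algebra $\mathcal{L}$ generated by $iH_0$ and $iH_x^j=i(1_S\otimes\sigma_x^j)$, $iH_y^j=i(1_S\otimes\sigma_y^j)$, $j=1,\dots,M$. If $i(1_S\otimes\sigma_x^j\sigma_x^{j+1})\in\mathcal{L}$ for every $j=1,2,\dots,M-1$, then $i(1_S\otimes\sigma_{[\alpha]})\in\mathcal{L}$ for every $[\alpha]=(\alpha_1,\dots,\alpha_M)\in\{x,y,z,0\}^M$ with $[\alpha]\neq(0,0,\dots,0)$.
   Context: The controlled system is $\mathbb{C}^N$ with orthonormal basis $|1\rangle,\dots,|N\rangle$; $e_{jk}=|j\rangle\langle k|$. $H_S=\sum_{j=1}^N E_j e_{jj}$ with real $E_j$, $\sum_j E_j=0$. For $1\le j<k\le N$: $x_{jk}=e_{jk}+e_{kj}$, $y_{jk}=i(e_{jk}-e_{kj})$, $h_j=e_{jj}-e_{j+1,j+1}$; $x_j=x_{j,j+1}$, $y_j=y_{j,j+1}$; $s_j^{(1)}=x_j$, $s_j^{(2)}=y_j$. The accessor is $(\mathbb{C}^2)^{\otimes M}$ ($M$ qubits); $\sigma_\alpha^j=1\otimes\cdots\otimes\sigma_\alpha\otimes\cdots\otimes 1$ is the Pauli matrix $\sigma_\alpha$ ($\alpha=x,y,z$) acting on the $j$-th qubit, $\sigma_0=1$, and for $[\alpha]\in\{x,y,z,0\}^M$, $\sigma_{[\alpha]}=\prod_{j=1}^M\sigma^j_{\alpha_j}$. $1_S,1_A$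 denote identities. $H_A=\sum_{j=1}^M\hbar\omega_j\sigma_z^j+\sum_{j=1}^{M-1}c_j\sigma_x^j\sigma_x^{j+1}$ (real $\omega_j,c_j$); $H_S'=\sum_{j=1}^{N-1}d_j x_j\otimes 1_A$ (real $d_j$); $H_{SA}=\sum_{j=1}^{N-1}\sum_{k=1}^2\sum_{[\alpha]\in\{x,y\}^M} g^{j(k)}_{[\alpha]}\, s_j^{(k)}\otimes\sigma_{[\alpha]}$ (real coefficients); $H_0=H_S\otimes 1_A+H_S'+1_S\otimes H_A+H_{SA}$. *)

theory Defs
  imports "Jordan_Normal_Form.Matrix"
begin

definition kron :: "complex mat \<Rightarrow> complex mat \<Rightarrow> complex mat" where
  "kron A B = mat (dim_row A * dim_row B) (dim_col A * dim_col B)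
     (\<lambda>(i,j). A $$ (i div dim_row B, j div dim_col B) * B $$ (i mod dim_row B, j mod dim_col B))"

definition msum :: "nat \<Rightarrow> ('a \<Rightarrow> complex mat) \<Rightarrow> 'a set \<Rightarrow> complex mat" where
  "msum d f A = mat d d (\<lambda>ij. \<Sum>a\<in>A. f a $$ ij)"

datatype pauli = P0 | PX | PY | PZ

definition pmat :: "pauli \<Rightarrow> complex mat" where
  "pmat a = (case a of
      P0 \<Rightarrow> mat_of_rows_list 2 [[1,0],[0,1]]
    | PX \<Rightarrow> mat_of_rows_list 2 [[0,1],[1,0]]
    | PY \<Rightarrow> mat_of_rows_list 2 [[0,-\<i>],[\<i>,0]]
    | PZ \<Rightarrow> mat_of_rows_list 2 [[1,0],[0,-1]])"

(* sigma_[alpha] for alpha = [alpha_1,...,alpha_M]; first list entry acts on qubit 1 *)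
definition pstr :: "pauli list \<Rightarrow> complex mat" where
  "pstr as = foldr (\<lambda>a acc. kron (pmat a) acc) as (1\<^sub>m 1)"

(* sigma_alpha^j on M qubits, j in {1..M} *)
definition sig :: "nat \<Rightarrow> nat \<Rightarrow> pauli \<Rightarrow> complex mat" where
  "sig M j a = pstr (map (\<lambda>k. if k = j then a else P0) [1..<M+1])"

(* e_{jk} = |j><k| on C^N, 1-based indices *)
definition ee :: "nat \<Rightarrow> nat \<Rightarrow> nat \<Rightarrow> complex mat" where
  "ee N j k = mat N N (\<lambda>(r,c). if r = j - 1 \<and> c = k - 1 then 1 else 0)"

definition xj :: "nat \<Rightarrow> nat \<Rightarrow> complex mat" where
  "xj N j = ee N j (j+1) + ee N (j+1) j"

definition yj :: "nat \<Rightarrow> nat \<Rightarrow> complex mat" where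
  "yj N j = \<i> \<cdot>\<^sub>m (ee N j (j+1) - ee N (j+1) j)"

definition sj :: "nat \<Rightarrow> nat \<Rightarrow> nat \<Rightarrow> complex mat" where
  "sj N j k = (if k = 1 then xj N j else yj N j)"

inductive_set lie_gen :: "complex mat set \<Rightarrow> complex mat set" for S where
  gen: "A \<in> S \<Longrightarrow> A \<in> lie_gen S"
| add: "A \<in> lie_gen S \<Longrightarrow> B \<in> lie_gen S \<Longrightarrow> A + B \<in> lie_gen S"
| smult: "A \<in> lie_gen S \<Longrightarrow> complex_of_real r \<cdot>\<^sub>m A \<in> lie_gen S"
| comm: "A \<in> lie_gen S \<Longrightarrow> B \<in> lie_gen S \<Longrightarrow> A * B - B * A \<in> lie_gen S"

definition H0 :: "nat \<Rightarrow> nat \<Rightarrow> (nat \<Rightarrow> real) \<Rightarrow> (nat \<Rightarrow> real) \<Rightarrow> (nat \<Rightarrow> real)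
    \<Rightarrow> (nat \<Rightarrow> real) \<Rightarrow> (nat \<Rightarrow> nat \<Rightarrow> pauli list \<Rightarrow> real) \<Rightarrow> real \<Rightarrow> complex mat" where
  "H0 N M E \<omega> c d g hbar =
     (let D = N * 2 ^ M; IS = 1\<^sub>m N; IA = 1\<^sub>m (2 ^ M) in
       kron (msum N (\<lambda>j. complex_of_real (E j) \<cdot>\<^sub>m ee N j j) {1..N}) IA
     + msum D (\<lambda>j. complex_of_real (d j) \<cdot>\<^sub>m kron (xj N j) IA) {1..N-1}
     + kron IS (msum (2 ^ M) (\<lambda>j. complex_of_real (hbar * \<omega> j) \<cdot>\<^sub>m sig M j PZ) {1..M}
              + msum (2 ^ M) (\<lambda>j. complex_of_real (c j) \<cdot>\<^sub>m (sig M j PX * sig M (j+1) PX)) {1..M-1})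
     + msum D (\<lambda>(j,k,as). complex_of_real (g j k as) \<cdot>\<^sub>m kron (sj N j k) (pstr as))
         ({1..N-1} \<times> {1,2} \<times> {as. length as = M \<and> set as \<subseteq> {PX, PY}}))"

end

theory Submission imports Defs begin

fun pm :: "pauli \<Rightarrow> pauli \<Rightarrow> pauli" where
  "pm P0 b = b" | "pm a P0 = a"
| "pm PX PX = P0" | "pm PY PY = P0" | "pm PZ PZ = P0"
| "pm PX PY = PZ" | "pm PY PX = PZ"
| "pm PY PZ = PX" | "pm PZ PY = PX"
| "pm PZ PX = PY" | "pm PX PZ = PY"

fun ph :: "pauli \<Rightarrow> pauli \<Rightarrow> complex" where
  "ph PX PY = \<i>" | "ph PY PX = -\<i>"
| "ph PY PZ = \<i>" | "ph PZ PY = -\<i>"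
| "ph PZ PX = \<i>" | "ph PX PZ = -\<i>"
| "ph P0 _ = 1" | "ph PX PX = 1" | "ph PY PY = 1" | "ph PZ PZ = 1" | "ph PX P0 = 1" | "ph PY P0 = 1" | "ph PZ P0 = 1"

lemma pmat_carrier: "pmat a \<in> carrier_mat 2 2"
  by (cases a) (auto simp: pmat_def mat_of_rows_list_def)

lemma pmat_mult: "pmat a * pmat b = ph a b \<cdot>\<^sub>m pmat (pm a b)"
  by (rule eq_matI; cases a; cases b; auto simp: pmat_def mat_of_rows_list_def scalar_prod_def numeral_2_eq_2 less_Suc_eq)



lemma sum_prod_reindex:
  fixes f :: "nat \<Rightarrow> 'b::comm_monoid_add"
  assumes "b > 0"
  shows "sum f {..<a*b} = (\<Sum>k1<a. \<Sum>k2<b. f (k1*b+k2))"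
proof -
  have "sum f {..<a*b} = sum (\<lambda>(k1,k2). f (k1*b+k2)) ({..<a} \<times> {..<b})"
  proof (rule sum.reindex_bij_witness[where i="\<lambda>(k1,k2). k1*b+k2" and j="\<lambda>k. (k div b, k mod b)"])
    fix k assume k: "k \<in> {..<a*b}"
    thus "(case (k div b, k mod b) of (k1, k2) \<Rightarrow> k1 * b + k2) = k" by simp
    show "(k div b, k mod b) \<in> {..<a} \<times> {..<b}" using assms k
      by (auto simp: less_mult_imp_div_less)
    show "(case (k div b, k mod b) of (k1, k2) \<Rightarrow> f (k1 * b + k2)) = f k" by simp
  next
    fix p assume "p \<in> {..<a} \<times> {..<b}"
    then obtain k1 k2 where p: "p = (k1,k2)" "k1 < a" "k2 < b" by auto
    have "k1*b+k2 < k1*b + b" using p by simp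
    also have "\<dots> = Suc k1 * b" by simp
    also have "\<dots> \<le> a*b" using p by (intro mult_le_mono1) simp
    finally have "k1*b+k2 < a*b" .
    thus "(case p of (k1, k2) \<Rightarrow> k1 * b + k2) \<in> {..<a*b}" using p by simp
    show "((case p of (k1, k2) \<Rightarrow> k1 * b + k2) div b, (case p of (k1, k2) \<Rightarrow> k1 * b + k2) mod b) = p"
      using p by auto
  qed
  also have "\<dots> = (\<Sum>k1<a. \<Sum>k2<b. f (k1*b+k2))"
    by (simp add: sum.cartesian_product)
  finally show ?thesis .
qed


lemma kron_carrier[simp]: "kron A B \<in> carrier_mat (dim_row A * dim_row B) (dim_col A * dim_col B)"
  by (simp add: kron_def)

lemma kron_dims[simp]: "dim_row (kron A B) = dim_row A * dim_row B" "dim_col (kron A B) = dim_col A * dim_col B"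
  by (simp_all add: kron_def)

lemma kron_index: "i < dim_row A * dim_row B \<Longrightarrow> j < dim_col A * dim_col B \<Longrightarrow>
  kron A B $$ (i,j) = A $$ (i div dim_row B, j div dim_col B) * B $$ (i mod dim_row B, j mod dim_col B)"
  by (simp add: kron_def)

lemma kron_mult:
  assumes A: "A \<in> carrier_mat ra ca" and B: "B \<in> carrier_mat rb cb"
    and C: "C \<in> carrier_mat ca cc" and D: "D \<in> carrier_mat cb cd"
    and pos: "rb > 0" "cb > 0" "cd > 0"
  shows "kron A B * kron C D = kron (A*C) (B*D)"
proof (rule eq_matI)
  show "dim_row (kron A B * kron C D) = dim_row (kron (A * C) (B * D))" using A B C D by simp
  show "dim_col (kron A B * kron C D) = dim_col (kron (A * C) (B * D))" using A B C D by simp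
  fix i j assume i: "i < dim_row (kron (A * C) (B * D))" and j: "j < dim_col (kron (A * C) (B * D))"
  hence i': "i < ra * rb" and j': "j < cc * cd" using A B C D by auto
  have id: "i div rb < ra" "j div cd < cc" using i' j' pos by (auto simp: less_mult_imp_div_less)
  have im: "i mod rb < rb" "j mod cd < cd" using pos by auto
  have "(kron A B * kron C D) $$ (i,j) = (\<Sum>k<ca*cb. kron A B $$ (i,k) * kron C D $$ (k,j))"
    using A B C D i' j' by (simp add: scalar_prod_def atLeast0LessThan)
  also have "\<dots> = (\<Sum>k1<ca. \<Sum>k2<cb. kron A B $$ (i,k1*cb+k2) * kron C D $$ (k1*cb+k2,j))"
    by (rule sum_prod_reindex[OF pos(2)])
  also have "\<dots> = (\<Sum>k1<ca. \<Sum>k2<cb. (A $$ (i div rb, k1) * C $$ (k1, j div cd)) * (B $$ (i mod rb, k2) * D $$ (k2, j mod cd)))"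
  proof (intro sum.cong refl)
    fix k1 k2 assume k: "k1 \<in> {..<ca}" "k2 \<in> {..<cb}"
    have "k1*cb+k2 < ca*cb"
    proof -
      have "k1*cb+k2 < Suc k1 * cb" using k by simp
      also have "\<dots> \<le> ca*cb" using k by (intro mult_le_mono1) simp
      finally show ?thesis .
    qed
    thus "kron A B $$ (i,k1*cb+k2) * kron C D $$ (k1*cb+k2,j) = (A $$ (i div rb, k1) * C $$ (k1, j div cd)) * (B $$ (i mod rb, k2) * D $$ (k2, j mod cd))"
      using A B C D i' j' k by (simp add: kron_index)
  qed
  also have "\<dots> = (\<Sum>k1<ca. A $$ (i div rb, k1) * C $$ (k1, j div cd)) * (\<Sum>k2<cb. B $$ (i mod rb, k2) * D $$ (k2, j mod cd))"
    by (simp add: sum_product)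
  also have "\<dots> = kron (A*C) (B*D) $$ (i,j)"
    using A B C D i' j' id im by (simp add: kron_index scalar_prod_def atLeast0LessThan)
  finally show "(kron A B * kron C D) $$ (i,j) = kron (A*C) (B*D) $$ (i,j)" .
qed

lemma kron_smult_left: "dim_row B > 0 \<Longrightarrow> dim_col B > 0 \<Longrightarrow> kron (c \<cdot>\<^sub>m A) B = c \<cdot>\<^sub>m kron A B"
  by (rule eq_matI) (auto simp: kron_def less_mult_imp_div_less)

lemma kron_smult_right: "dim_row B > 0 \<Longrightarrow> dim_col B > 0 \<Longrightarrow> kron A (c \<cdot>\<^sub>m B) = c \<cdot>\<^sub>m kron A B"
  by (rule eq_matI) (auto simp: kron_def less_mult_imp_div_less)

lemma smult_smult_mat': "(a::complex) \<cdot>\<^sub>m (b \<cdot>\<^sub>m A) = (a * b) \<cdot>\<^sub>m A"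
  by (rule eq_matI) auto

lemma one_smult_mat': "(1::complex) \<cdot>\<^sub>m A = A"
  by (rule eq_matI) auto


fun smul :: "pauli list \<Rightarrow> pauli list \<Rightarrow> pauli list" where
  "smul (a#w) (b#v) = pm a b # smul w v" | "smul _ _ = []"

fun sph :: "pauli list \<Rightarrow> pauli list \<Rightarrow> complex" where
  "sph (a#w) (b#v) = ph a b * sph w v" | "sph _ _ = 1"

lemma pstr_carrier: "pstr w \<in> carrier_mat (2 ^ length w) (2 ^ length w)"
  by (induction w) (auto simp: pstr_def pmat_carrier[THEN carrier_matD(1)] pmat_carrier[THEN carrier_matD(2)])

lemma pstr_Cons: "pstr (a # w) = kron (pmat a) (pstr w)"
  by (simp add: pstr_def)

lemma pstr_mult: "length w = length v \<Longrightarrow> pstr w * pstr v = sph w v \<cdot>\<^sub>m pstr (smul w v)"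
proof (induction w arbitrary: v)
  case Nil
  thus ?case by (simp add: pstr_def one_smult_mat')
next
  case (Cons a w)
  then obtain b v' where v: "v = b # v'" and l: "length w = length v'" by (cases v) auto
  have "pstr (a#w) * pstr v = kron (pmat a * pmat b) (pstr w * pstr v')"
    unfolding v pstr_Cons
    by (rule kron_mult[where ra=2 and ca=2 and cc=2 and rb="2^length w" and cb="2^length w" and cd="2^length w"])
       (use pmat_carrier[of a] pmat_carrier[of b] pstr_carrier[of w] pstr_carrier[of v'] l in auto)
  also have "\<dots> = sph (a#w) v \<cdot>\<^sub>m pstr (smul (a#w) v)"
    using Cons.IH[OF l] pstr_carrier[of w] pstr_carrier[of "smul w v'"] pmat_carrier[of "pm a b"]
    by (simp add: v pmat_mult pstr_Cons kron_smult_left kron_smult_right smult_smult_mat' mult.commute)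
  finally show ?case .
qed


lemma pm_comm: "pm a b = pm b a"
  by (cases a; cases b) auto

lemma ph_cnj: "ph b a = cnj (ph a b)"
  by (cases a; cases b) auto

lemma smul_comm: "smul w v = smul v w"
proof (induction w arbitrary: v)
  case Nil thus ?case by (cases v) auto
next
  case (Cons a w) thus ?case by (cases v) (auto intro: pm_comm)
qed

lemma sph_cnj: "sph v w = cnj (sph w v)"
proof (induction w arbitrary: v)
  case Nil thus ?case by (cases v) auto
next
  case (Cons a w) thus ?case by (cases v) (auto simp: ph_cnj[of _ a])
qed

lemma length_smul[simp]: "length (smul w v) = min (length w) (length v)"
  by (induction w v rule: smul.induct) auto

definition KK :: "nat \<Rightarrow> pauli list \<Rightarrow> complex mat" where
  "KK N w = kron (1\<^sub>m N) (pstr w)"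

lemma KK_carrier: "KK N w \<in> carrier_mat (N * 2 ^ length w) (N * 2 ^ length w)"
  using pstr_carrier[of w] by (auto simp: KK_def)

lemma KK_mult: assumes N: "N > 0" and l: "length w = length v"
  shows "KK N w * KK N v = sph w v \<cdot>\<^sub>m KK N (smul w v)"
proof -
  have "kron (1\<^sub>m N) (pstr w) * kron (1\<^sub>m N) (pstr v) = kron (1\<^sub>m N * 1\<^sub>m N) (pstr w * pstr v)"
    by (rule kron_mult[where ra=N and ca=N and cc=N and rb="2^length w" and cb="2^length w" and cd="2^length w"])
      (use pstr_carrier[of w] pstr_carrier[of v] l in auto)
  thus ?thesis using pstr_carrier[of "smul w v"] l unfolding KK_def
    by (simp add: pstr_mult kron_smult_right)
qed

lemma closure:
  assumes "\<i> \<cdot>\<^sub>m KK N w \<in> lie_gen S" "\<i> \<cdot>\<^sub>m KK N v \<in> lie_gen S"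
    and l: "length w = length v" and im: "Im (sph w v) \<noteq> 0" and N: "N > 0"
  shows "\<i> \<cdot>\<^sub>m KK N (smul w v) \<in> lie_gen S"
proof -
  let ?n = "N * 2 ^ length w"
  have cw: "KK N w \<in> carrier_mat ?n ?n" and cv: "KK N v \<in> carrier_mat ?n ?n"
    using KK_carrier[of N w] KK_carrier[of N v] l by auto
  have cc: "KK N (smul w v) \<in> carrier_mat ?n ?n" using KK_carrier[of N "smul w v"] l by auto
  have e1: "(\<i> \<cdot>\<^sub>m KK N w) * (\<i> \<cdot>\<^sub>m KK N v) = (- sph w v) \<cdot>\<^sub>m KK N (smul w v)"
    using mult_smult_assoc_mat[OF cw smult_carrier_mat[OF cv]] mult_smult_distrib[OF cw cv] KK_mult[OF N l]
    by (simp add: smult_smult_mat')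
  have e2: "(\<i> \<cdot>\<^sub>m KK N v) * (\<i> \<cdot>\<^sub>m KK N w) = (- cnj (sph w v)) \<cdot>\<^sub>m KK N (smul w v)"
    using mult_smult_assoc_mat[OF cv smult_carrier_mat[OF cw]] mult_smult_distrib[OF cv cw] KK_mult[OF N l[symmetric]]
    by (simp add: smult_smult_mat' sph_cnj[of v w] smul_comm[of v w])
  have "(\<i> \<cdot>\<^sub>m KK N w) * (\<i> \<cdot>\<^sub>m KK N v) - (\<i> \<cdot>\<^sub>m KK N v) * (\<i> \<cdot>\<^sub>m KK N w) \<in> lie_gen S"
    by (rule lie_gen.comm[OF assms(1,2)])
  hence "complex_of_real (-1 / (2 * Im (sph w v))) \<cdot>\<^sub>m ((\<i> \<cdot>\<^sub>m KK N w) * (\<i> \<cdot>\<^sub>m KK N v) - (\<i> \<cdot>\<^sub>m KK N v) * (\<i> \<cdot>\<^sub>m KK N w)) \<in> lie_gen S"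
    by (rule lie_gen.smult)
  also have "complex_of_real (-1 / (2 * Im (sph w v))) \<cdot>\<^sub>m ((\<i> \<cdot>\<^sub>m KK N w) * (\<i> \<cdot>\<^sub>m KK N v) - (\<i> \<cdot>\<^sub>m KK N v) * (\<i> \<cdot>\<^sub>m KK N w)) = \<i> \<cdot>\<^sub>m KK N (smul w v)"
  proof -
    have z: "- sph w v + cnj (sph w v) = - (complex_of_real (2 * Im (sph w v)) * \<i>)"
      using complex_diff_cnj[of "sph w v"] by (simp add: algebra_simps)
    have "(- sph w v) \<cdot>\<^sub>m KK N (smul w v) - (- cnj (sph w v)) \<cdot>\<^sub>m KK N (smul w v)
          = (- sph w v + cnj (sph w v)) \<cdot>\<^sub>m KK N (smul w v)"
      by (rule eq_matI) (auto simp: ring_distribs)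
    also have "\<dots> = - (complex_of_real (2 * Im (sph w v)) * \<i>) \<cdot>\<^sub>m KK N (smul w v)"
      by (simp only: z)
    finally have "complex_of_real (-1 / (2 * Im (sph w v))) \<cdot>\<^sub>m ((- sph w v) \<cdot>\<^sub>m KK N (smul w v) - (- cnj (sph w v)) \<cdot>\<^sub>m KK N (smul w v))
       = (complex_of_real (-1 / (2 * Im (sph w v))) * - (complex_of_real (2 * Im (sph w v)) * \<i>)) \<cdot>\<^sub>m KK N (smul w v)"
      by (simp add: smult_smult_mat')
    also have "complex_of_real (-1 / (2 * Im (sph w v))) * - (complex_of_real (2 * Im (sph w v)) * \<i>) = \<i>"
    proof -
      have "complex_of_real (2 * Im (sph w v)) \<noteq> 0" using im by simp
      thus ?thesis by (simp add: divide_simps)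
    qed
    finally show ?thesis unfolding e1 e2 .
  qed
  finally show ?thesis .
qed


lemma smul_rep: "length w = n \<Longrightarrow> smul w (replicate n P0) = w"
proof (induction w arbitrary: n)
  case (Cons a w) thus ?case by (cases n) (auto, cases a, auto)
qed auto

lemma sph_rep: "length w = n \<Longrightarrow> sph w (replicate n P0) = 1"
proof (induction w arbitrary: n)
  case (Cons a w) thus ?case by (cases n) (auto, cases a, auto)
qed auto

lemma sph_upd: "length w = length v \<Longrightarrow> k < length v \<Longrightarrow> v!k = P0 \<Longrightarrow>
   sph w (v[k:=b]) = sph w v * ph (w!k) b"
proof (induction w arbitrary: v k)
  case Nil thus ?case by simp
next
  case (Cons a w)
  then obtain c v' where v: "v = c # v'" by (cases v) auto
  show ?case
  proof (cases k)
    case 0 thus ?thesis using Cons v by (cases a; cases b) auto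
  next
    case (Suc k') thus ?thesis using Cons.IH[of v' k'] Cons.prems v by auto
  qed
qed

lemma smul_upd: "length w = length v \<Longrightarrow> k < length v \<Longrightarrow> v!k = P0 \<Longrightarrow>
   smul w (v[k:=b]) = (smul w v)[k := pm (w!k) b]"
proof (induction w arbitrary: v k)
  case Nil thus ?case by simp
next
  case (Cons a w)
  then obtain c v' where v: "v = c # v'" by (cases v) auto
  show ?case
  proof (cases k)
    case 0 thus ?thesis using Cons v by (cases a; cases b) auto
  next
    case (Suc k') thus ?thesis using Cons.IH[of v' k'] Cons.prems v by auto
  qed
qed

definition single :: "nat \<Rightarrow> nat \<Rightarrow> pauli \<Rightarrow> pauli list" where
  "single M k b = (replicate M P0)[k:=b]"

definition two :: "nat \<Rightarrow> nat \<Rightarrow> pauli \<Rightarrow> pauli \<Rightarrow> pauli list" where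
  "two M k b1 b2 = (replicate M P0)[k:=b1, Suc k:=b2]"

lemma single_nth: "k < M \<Longrightarrow> single M k b ! k = b"
  by (simp add: single_def)

lemma sph_single: "length w = M \<Longrightarrow> k < M \<Longrightarrow> sph w (single M k b) = ph (w!k) b"
  unfolding single_def by (subst sph_upd) (auto simp: sph_rep)

lemma smul_single: "length w = M \<Longrightarrow> k < M \<Longrightarrow> smul w (single M k b) = w[k := pm (w!k) b]"
  unfolding single_def by (subst smul_upd) (auto simp: smul_rep)

lemma sph_two: "length w = M \<Longrightarrow> Suc k < M \<Longrightarrow> sph w (two M k b1 b2) = ph (w!k) b1 * ph (w!Suc k) b2"
  unfolding two_def by (subst sph_upd) (auto simp: sph_upd sph_rep)

lemma smul_two: "length w = M \<Longrightarrow> Suc k < M \<Longrightarrow> smul w (two M k b1 b2) = w[k := pm (w!k) b1, Suc k := pm (w!Suc k) b2]"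
  unfolding two_def by (subst smul_upd) (auto simp: smul_upd smul_rep)


lemma combinatorics:
  fixes R :: "pauli list set"
  assumes len: "\<And>w. w \<in> R \<Longrightarrow> length w = M"
    and cl: "\<And>w v. w \<in> R \<Longrightarrow> v \<in> R \<Longrightarrow> Im (sph w v) \<noteq> 0 \<Longrightarrow> smul w v \<in> R"
    and sX: "\<And>k. k < M \<Longrightarrow> single M k PX \<in> R"
    and sY: "\<And>k. k < M \<Longrightarrow> single M k PY \<in> R"
    and tXX: "\<And>k. Suc k < M \<Longrightarrow> two M k PX PX \<in> R"
  shows "length w = M \<Longrightarrow> w \<noteq> replicate M P0 \<Longrightarrow> w \<in> R"
proof -
  have lsingle[simp]: "length (single M k b) = M" for k b by (simp add: single_def)
  have ltwo[simp]: "length (two M k b1 b2) = M" for k b1 b2 by (simp add: two_def)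
  have sZ: "single M k PZ \<in> R" if k: "k < M" for k
  proof -
    have "Im (sph (single M k PX) (single M k PY)) \<noteq> 0" using k by (simp add: sph_single single_nth)
    hence "smul (single M k PX) (single M k PY) \<in> R"
      using cl[OF sX[OF k] sY[OF k]] by simp
    thus ?thesis using k by (simp add: smul_single single_nth) (simp add: single_def)
  qed
  have LC: "w[k:=b] \<in> R" if w: "w \<in> R" and k: "k < M" and nz: "w!k \<noteq> P0" "b \<noteq> P0" for w k b
  proof (cases "b = w!k")
    case True thus ?thesis using w by simp
  next
    case False
    let ?c = "pm (w!k) b"
    have sc: "single M k ?c \<in> R"
      using nz False sX[OF k] sY[OF k] sZ[OF k] by (cases "w!k"; cases b) auto
    have "smul w (single M k ?c) \<in> R"
      using cl[OF w sc] nz False len[OF w] k by (simp add: sph_single) (cases "w!k"; cases b; auto)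
    moreover have "smul w (single M k ?c) = w[k:=b]"
      using nz False len[OF w] k by (simp add: smul_single) (cases "w!k"; cases b; auto)
    ultimately show ?thesis by simp
  qed
  have sall: "single M k b \<in> R" if "k < M" "b \<noteq> P0" for k b
    using LC[OF sX[OF that(1)] that(1)] that by (simp add: single_def)
  have tall: "two M k b1 b2 \<in> R" if "Suc k < M" "b1 \<noteq> P0" "b2 \<noteq> P0" for k b1 b2
  proof -
    have "(two M k PX PX)[k:=b1] \<in> R"
      using LC[OF tXX[OF that(1)]] that by (simp add: two_def)
    hence "(two M k PX PX)[k:=b1, Suc k:=b2] \<in> R"
      using LC[of "(two M k PX PX)[k:=b1]" "Suc k" b2] that by (simp add: two_def)
    thus ?thesis by (simp add: two_def list_update_swap)
  qed
  have Q: "\<forall>w. length w = M \<longrightarrow> (\<forall>i. k \<le> i \<longrightarrow> i < M \<longrightarrow> w!i = P0) \<longrightarrow> w \<noteq> replicate M P0 \<longrightarrow> w \<in> R" for k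
  proof (induction k)
    case 0
    show ?case
    proof (intro allI impI)
      fix w :: "pauli list" assume "length w = M" "\<forall>i. 0 \<le> i \<longrightarrow> i < M \<longrightarrow> w ! i = P0" "w \<noteq> replicate M P0"
      thus "w \<in> R" by (metis le0 replicate_eqI in_set_conv_nth)
    qed
  next
    case (Suc k)
    show ?case
    proof (intro allI impI)
      fix w :: "pauli list" assume lw: "length w = M" and z: "\<forall>i. Suc k \<le> i \<longrightarrow> i < M \<longrightarrow> w ! i = P0"
        and nz: "w \<noteq> replicate M P0"
      show "w \<in> R"
      proof (cases "k < M \<and> w!k \<noteq> P0")
        case False
        hence "\<forall>i. k \<le> i \<longrightarrow> i < M \<longrightarrow> w ! i = P0" using z by (metis le_eq_less_or_eq Suc_leI order.strict_trans1)
        thus ?thesis using Suc.IH lw nz by blast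
      next
        case True
        hence kM: "k < M" and a: "w!k \<noteq> P0" by auto
        define u where "u = w[k:=P0]"
        have lu: "length u = M" using lw by (simp add: u_def)
        show ?thesis
        proof (cases "u = replicate M P0")
          case True
          hence "w = single M k (w!k)"
            unfolding single_def using lw kM
            by (metis list_update_id list_update_overwrite u_def)
          thus ?thesis using sall[OF kM a] by simp
        next
          case False
          then obtain j where kj: "k = Suc j"
          proof (cases k)
            case 0
            have "u = replicate M P0"
              by (rule nth_equalityI) (use lu z 0 in \<open>auto simp: u_def nth_list_update\<close>)
            thus ?thesis using False by simp
          qed auto
          define u1 where "u1 = u[j:=PX]"
          have u1R: "u1 \<in> R"
          proof -
            have "length u1 = M" using lu by (simp add: u1_def)
            moreover have "\<forall>i. k \<le> i \<longrightarrow> i < M \<longrightarrow> u1 ! i = P0"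
              using z kj lw by (auto simp: u1_def u_def nth_list_update)
            moreover have "u1 \<noteq> replicate M P0"
              using kj kM lu by (auto simp: u1_def dest: arg_cong[where f="\<lambda>l. l!j"])
            ultimately show ?thesis using Suc.IH by blast
          qed
          have jM: "Suc j < M" using kj kM by simp
          have u1j: "u1!j = PX" "u1!Suc j = P0" using lu jM kj by (auto simp: u1_def u_def)
          have l1: "length u1 = M" using lu by (simp add: u1_def)
          define t where "t = smul u1 (two M j PY PX)"
          have tR: "t \<in> R" unfolding t_def
            by (rule cl[OF u1R tall[OF jM]]) (use l1 jM u1j in \<open>auto simp: sph_two\<close>)
          have teq: "t = w[j:=PZ, k:=PX]" unfolding t_def
            using l1 jM u1j kj by (simp add: smul_two u1_def u_def list_update_swap)
          have lt: "length t = M" using len[OF tR] .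
          show ?thesis
          proof (cases "w!j = P0")
            case False
            have "t[j:=w!j] \<in> R" using LC[OF tR] jM lt False teq kj by auto
            hence "t[j:=w!j, k:=w!k] \<in> R" using LC[of "t[j:=w!j]" k "w!k"] kM a teq kj lw by auto
            moreover have "t[j:=w!j, k:=w!k] = w" using teq kj lw jM
              by (intro nth_equalityI) (auto simp: nth_list_update)
            ultimately show ?thesis by simp
          next
            case True
            define t2 where "t2 = smul t (two M j PZ PY)"
            have t2R: "t2 \<in> R" unfolding t2_def
              by (rule cl[OF tR tall[OF jM]]) (use lt jM teq kj lw in \<open>auto simp: sph_two\<close>)
            have t2eq: "t2 = w[k:=PZ]" unfolding t2_def
              using lt jM teq kj lw True by (simp add: smul_two list_update_swap) (metis list_update_id)
            have "t2[k:=w!k] \<in> R" by (rule LC[OF t2R kM]) (use t2eq kM lw a in auto)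
            moreover have "t2[k:=w!k] = w" using t2eq kM lw by simp
            ultimately show ?thesis by simp
          qed
        qed
      qed
    qed
  qed
  show "length w = M \<Longrightarrow> w \<noteq> replicate M P0 \<Longrightarrow> w \<in> R" using Q[of M] by auto
qed


lemma sig_single: "1 \<le> j \<Longrightarrow> j \<le> M \<Longrightarrow> sig M j a = pstr (single M (j-1) a)"
  unfolding sig_def single_def
  by (rule arg_cong[where f=pstr], rule nth_equalityI) (auto simp: nth_list_update simp del: upt_Suc)

theorem lemma2:
  fixes N M :: nat and E \<omega> c d :: "nat \<Rightarrow> real"
    and g :: "nat \<Rightarrow> nat \<Rightarrow> pauli list \<Rightarrow> real" and hbar :: real
  assumes "N \<ge> 2" and "M \<ge> 1"
    and "(\<Sum>j\<in>{1..N}. E j) = 0"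
  defines "L \<equiv> lie_gen ({\<i> \<cdot>\<^sub>m H0 N M E \<omega> c d g hbar}
                 \<union> {\<i> \<cdot>\<^sub>m kron (1\<^sub>m N) (sig M j PX) | j. j \<in> {1..M}}
                 \<union> {\<i> \<cdot>\<^sub>m kron (1\<^sub>m N) (sig M j PY) | j. j \<in> {1..M}})"
  assumes "\<forall>j\<in>{1..M-1}. \<i> \<cdot>\<^sub>m kron (1\<^sub>m N) (sig M j PX * sig M (j+1) PX) \<in> L"
  shows "\<forall>as. length as = M \<and> as \<noteq> replicate M P0 \<longrightarrow> \<i> \<cdot>\<^sub>m kron (1\<^sub>m N) (pstr as) \<in> L"
proof -
  define S where "S = ({\<i> \<cdot>\<^sub>m H0 N M E \<omega> c d g hbar}
                 \<union> {\<i> \<cdot>\<^sub>m kron (1\<^sub>m N) (sig M j PX) | j. j \<in> {1..M}}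
                 \<union> {\<i> \<cdot>\<^sub>m kron (1\<^sub>m N) (sig M j PY) | j. j \<in> {1..M}})"
  have LS: "L = lie_gen S" unfolding L_def S_def ..
  have N: "N > 0" using assms(1) by simp
  define R where "R = {w. length w = M \<and> \<i> \<cdot>\<^sub>m KK N w \<in> L}"
  have lsingle[simp]: "length (single M k b) = M" for k b by (simp add: single_def)
  have "w \<in> R" if "length w = M" "w \<noteq> replicate M P0" for w
  proof (rule combinatorics[of R M, OF _ _ _ _ _ that])
    show "length w = M" if "w \<in> R" for w using that by (simp add: R_def)
    show "smul w v \<in> R" if "w \<in> R" "v \<in> R" "Im (sph w v) \<noteq> 0" for w v
      using that closure[of N w S v] N by (auto simp: R_def LS)
    show "single M k PX \<in> R" if "k < M" for k
    proof -
      have "\<i> \<cdot>\<^sub>m kron (1\<^sub>m N) (sig M (Suc k) PX) \<in> S" using that unfolding S_def by auto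
      thus ?thesis using that by (simp add: R_def LS KK_def sig_single lie_gen.gen)
    qed
    show "single M k PY \<in> R" if "k < M" for k
    proof -
      have "\<i> \<cdot>\<^sub>m kron (1\<^sub>m N) (sig M (Suc k) PY) \<in> S" using that unfolding S_def by auto
      thus ?thesis using that by (simp add: R_def LS KK_def sig_single lie_gen.gen)
    qed
    show "two M k PX PX \<in> R" if k: "Suc k < M" for k
    proof -
      have "\<i> \<cdot>\<^sub>m kron (1\<^sub>m N) (sig M (Suc k) PX * sig M (Suc k+1) PX) \<in> L"
        using assms(5) k by auto
      moreover have "sig M (Suc k) PX * sig M (Suc k+1) PX = pstr (two M k PX PX)"
      proof -
        have "sig M (Suc k) PX * sig M (Suc k+1) PX = pstr (single M k PX) * pstr (single M (Suc k) PX)"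
          using k by (simp add: sig_single)
        also have "\<dots> = sph (single M k PX) (single M (Suc k) PX) \<cdot>\<^sub>m pstr (smul (single M k PX) (single M (Suc k) PX))"
          by (rule pstr_mult) simp
        also have "\<dots> = pstr (two M k PX PX)"
          using k by (simp add: sph_single smul_single one_smult_mat') (simp add: single_def two_def one_smult_mat')
        finally show ?thesis .
      qed
      ultimately show ?thesis using k by (simp add: R_def KK_def two_def)
    qed
  qed
  thus ?thesis by (auto simp: R_def KK_def)
qed

end
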